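(* For any MeanEstimation algorithm (possibly using shared randomness) in which any machine receives at most $b$ bits, there is a valid input for which $\mathbb{E}[\|\mathbf{EST}-\boldsymbol\mu\|^2]=\Omega\!\left(y^2\,2^{-2b/d}\right)$.
   Context: MeanEstimation: there are $n$ machines; machine $v$ receives $\mathbf{x}_v\in\mathbb{R}^d$, and all receive a common $y$ with $\|\mathbf{x}_u-\mathbf{x}_v\|\le y$ for all $u,v$. All machines must output the same $\mathbf{EST}\in\mathbb{R}^d$ with $\mathbb{E}[\mathbf{EST}]=\boldsymbol\mu=\frac1n\sum_v\mathbf{x}_v$. $\|\cdot\|$ is a fixed one of the $\ell_1,\ell_2,\ell_\infty$ norms. Algorithms may use a common random string available to all machines. Bits received by a machine count all bits it receives from any source during the algorithm, and the bound $b$ holds with certainty. The hidden constant is absolute. *)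

theory Defs
  imports "HOL-Probability.Probability"
begin

text \<open>Vectors in R^d are functions nat => real whose coordinates i < d are the
  relevant ones. Machines are 0,...,n-1. The shared random string is an element
  of type nat => bool, distributed according to an arbitrary probability measure P.\<close>

datatype normkind = L1 | L2 | Linf

fun vnorm :: "normkind \<Rightarrow> nat \<Rightarrow> (nat \<Rightarrow> real) \<Rightarrow> real" where
  "vnorm L1 d v = (\<Sum>i<d. \<bar>v i\<bar>)"
| "vnorm L2 d v = sqrt (\<Sum>i<d. (v i)\<^sup>2)"
| "vnorm Linf d v = Max (insert 0 ((\<lambda>i. \<bar>v i\<bar>) ` {..<d}))"

definition valid_input :: "normkind \<Rightarrow> nat \<Rightarrow> nat \<Rightarrow> (nat \<Rightarrow> nat \<Rightarrow> real) \<Rightarrow> real \<Rightarrow> bool" where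
  "valid_input nk n d x y \<longleftrightarrow>
     (\<forall>v<n. \<forall>i. d \<le> i \<longrightarrow> x v i = 0) \<and>
     (\<forall>u<n. \<forall>v<n. vnorm nk d (\<lambda>i. x u i - x v i) \<le> y)"

definition mean_vec :: "nat \<Rightarrow> (nat \<Rightarrow> nat \<Rightarrow> real) \<Rightarrow> nat \<Rightarrow> real" where
  "mean_vec n x = (\<lambda>i. (\<Sum>v<n. x v i) / real n)"

text \<open>An algorithm is given by:
  msg v x y r : the bit string received by machine v (a function of all inputs and the
     shared randomness r), and
  out v xv y r m : the output of machine v, a function of its own input xv, y, the shared
     randomness r and the received bits m.
  The estimate EST is the (common) output; we read it off machine 0.\<close>
definition est_of ::
  "(nat \<Rightarrow> (nat \<Rightarrow> nat \<Rightarrow> real) \<Rightarrow> real \<Rightarrow> (nat \<Rightarrow> bool) \<Rightarrow> bool list) \<Rightarrow>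
   (nat \<Rightarrow> (nat \<Rightarrow> real) \<Rightarrow> real \<Rightarrow> (nat \<Rightarrow> bool) \<Rightarrow> bool list \<Rightarrow> (nat \<Rightarrow> real)) \<Rightarrow>
   (nat \<Rightarrow> nat \<Rightarrow> real) \<Rightarrow> real \<Rightarrow> (nat \<Rightarrow> bool) \<Rightarrow> nat \<Rightarrow> real" where
  "est_of msg out x y r = out 0 (x 0) y r (msg 0 x y r)"

definition mean_est_alg ::
  "normkind \<Rightarrow> nat \<Rightarrow> nat \<Rightarrow> nat \<Rightarrow> (nat \<Rightarrow> bool) measure \<Rightarrow>
   (nat \<Rightarrow> (nat \<Rightarrow> nat \<Rightarrow> real) \<Rightarrow> real \<Rightarrow> (nat \<Rightarrow> bool) \<Rightarrow> bool list) \<Rightarrow>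
   (nat \<Rightarrow> (nat \<Rightarrow> real) \<Rightarrow> real \<Rightarrow> (nat \<Rightarrow> bool) \<Rightarrow> bool list \<Rightarrow> (nat \<Rightarrow> real)) \<Rightarrow> bool" where
  "mean_est_alg nk n d b P msg out \<longleftrightarrow>
     (\<forall>x y. valid_input nk n d x y \<longrightarrow>
        (\<forall>r\<in>space P. \<forall>v<n. length (msg v x y r) \<le> b) \<and>
        (\<forall>r\<in>space P. \<forall>v<n. out v (x v) y r (msg v x y r) = est_of msg out x y r) \<and>
        (\<forall>i<d. integrable P (\<lambda>r. est_of msg out x y r i) \<and>
               (\<integral>r. est_of msg out x y r i \<partial>P) = mean_vec n x i))"

end

theory Submission
  imports Defs
begin

lemma geom_half: "(\<Sum>l<M. (1/2::real)^l) \<le> 2"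
proof -
  have "(\<Sum>l<M. (1/2::real)^l) = 2 - 2*(1/2)^M" by (induction M) auto
  then show ?thesis by simp
qed

lemma sum_reindex_le:
  fixes f :: "nat \<Rightarrow> real"
  assumes "inj_on \<phi> A" "\<phi> ` A \<subseteq> {..<M}" "\<And>l. f l \<ge> 0"
  shows "(\<Sum>j\<in>A. f (\<phi> j)) \<le> (\<Sum>l<M. f l)"
proof -
  have "(\<Sum>j\<in>A. f (\<phi> j)) = (\<Sum>l\<in>\<phi>`A. f l)" using sum.reindex[OF assms(1), of f] by simp
  also have "\<dots> \<le> (\<Sum>l<M. f l)" by (rule sum_mono2) (use assms in auto)
  finally show ?thesis .
qed

lemma oneD: "(\<Sum>j<M. 2 powr (-\<bar>u - real j\<bar>)) \<le> (4::real)"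
proof -
  define A where "A = {j\<in>{..<M}. u \<le> real j}"
  define B where "B = {j\<in>{..<M}. real j < u}"
  have split: "{..<M} = A \<union> B" "A \<inter> B = {}" unfolding A_def B_def by auto
  have fA: "finite A" "finite B" unfolding A_def B_def by auto
  have SA: "(\<Sum>j\<in>A. 2 powr (-\<bar>u - real j\<bar>)) \<le> 2"
  proof (cases "A = {}")
    case True then show ?thesis by simp
  next
    case False
    define j0 where "j0 = Min A"
    have j0A: "j0 \<in> A" "\<And>j. j \<in> A \<Longrightarrow> j0 \<le> j" using False fA unfolding j0_def by auto
    have "(\<Sum>j\<in>A. 2 powr (-\<bar>u - real j\<bar>)) \<le> (\<Sum>j\<in>A. (1/2::real)^(j - j0))"
    proof (rule sum_mono)
      fix j assume j: "j \<in> A"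
      have "u \<le> real j0" using j0A unfolding A_def by auto
      then have "-\<bar>u - real j\<bar> \<le> - real (j - j0)" using j0A(2)[OF j] j unfolding A_def by auto
      then have "2 powr (-\<bar>u - real j\<bar>) \<le> 2 powr (- real (j - j0))" by simp
      also have "\<dots> = (1/2::real)^(j - j0)" by (simp add: powr_minus powr_realpow power_divide inverse_eq_divide)
      finally show "2 powr (-\<bar>u - real j\<bar>) \<le> (1/2::real)^(j - j0)" .
    qed
    also have "\<dots> \<le> (\<Sum>l<M. (1/2::real)^l)"
    proof (rule sum_reindex_le[where \<phi>="\<lambda>j. j - j0"])
      show "inj_on (\<lambda>j. j - j0) A"
      proof (rule inj_onI)
        fix x y assume "x \<in> A" "y \<in> A" "x - j0 = y - j0"
        then show "x = y" using j0A(2)[of x] j0A(2)[of y] by arith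
      qed
    qed (auto simp: A_def)
    also have "\<dots> \<le> 2" by (rule geom_half)
    finally show ?thesis .
  qed
  have SB: "(\<Sum>j\<in>B. 2 powr (-\<bar>u - real j\<bar>)) \<le> 2"
  proof (cases "B = {}")
    case True then show ?thesis by simp
  next
    case False
    define j1 where "j1 = Max B"
    have j1B: "j1 \<in> B" "\<And>j. j \<in> B \<Longrightarrow> j \<le> j1" using False fA unfolding j1_def by auto
    have "(\<Sum>j\<in>B. 2 powr (-\<bar>u - real j\<bar>)) \<le> (\<Sum>j\<in>B. (1/2::real)^(j1 - j))"
    proof (rule sum_mono)
      fix j assume j: "j \<in> B"
      have "real j1 < u" using j1B unfolding B_def by auto
      then have "-\<bar>u - real j\<bar> \<le> - real (j1 - j)" using j1B(2)[OF j] j unfolding B_def by auto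
      then have "2 powr (-\<bar>u - real j\<bar>) \<le> 2 powr (- real (j1 - j))" by simp
      also have "\<dots> = (1/2::real)^(j1 - j)" by (simp add: powr_minus powr_realpow power_divide inverse_eq_divide)
      finally show "2 powr (-\<bar>u - real j\<bar>) \<le> (1/2::real)^(j1 - j)" .
    qed
    also have "\<dots> \<le> (\<Sum>l<M. (1/2::real)^l)"
    proof (rule sum_reindex_le[where \<phi>="\<lambda>j. j1 - j"])
      show "inj_on (\<lambda>j. j1 - j) B"
      proof (rule inj_onI)
        fix x y assume "x \<in> B" "y \<in> B" "j1 - x = j1 - y"
        then show "x = y" using j1B(2)[of x] j1B(2)[of y] by arith
      qed
      show "(\<lambda>j. j1 - j) ` B \<subseteq> {..<M}" using j1B by (auto simp: B_def)
    qed auto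
    also have "\<dots> \<le> 2" by (rule geom_half)
    finally show ?thesis .
  qed
  have "(\<Sum>j<M. 2 powr (-\<bar>u - real j\<bar>)) = (\<Sum>j\<in>A. 2 powr (-\<bar>u - real j\<bar>)) + (\<Sum>j\<in>B. 2 powr (-\<bar>u - real j\<bar>))"
    by (subst split(1), rule sum.union_disjoint) (use fA split in auto)
  then show ?thesis using SA SB by simp
qed

lemma count_lemma:
  fixes t :: "nat \<Rightarrow> real" and g :: real
  assumes g: "g > 0"
  shows "card {k \<in> PiE {..<d} (\<lambda>_. {..<M}). (\<Sum>i<d. \<bar>t i - g * real (k i)\<bar>) < g * real d} \<le> 8^d"
proof -
  define Ks where "Ks = PiE {..<d} (\<lambda>_. {..<M::nat})"
  define w where "w = (\<lambda>i j. (2::real) powr (1 - \<bar>t i / g - real j\<bar>))"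
  have fin: "finite Ks" unfolding Ks_def by (auto intro: finite_PiE)
  have "card {k \<in> Ks. (\<Sum>i<d. \<bar>t i - g * real (k i)\<bar>) < g * real d}
      = (\<Sum>k\<in>{k \<in> Ks. (\<Sum>i<d. \<bar>t i - g * real (k i)\<bar>) < g * real d}. (1::real))" by simp
  also have "\<dots> \<le> (\<Sum>k\<in>{k \<in> Ks. (\<Sum>i<d. \<bar>t i - g * real (k i)\<bar>) < g * real d}. \<Prod>i<d. w i (k i))"
  proof (rule sum_mono)
    fix k assume "k \<in> {k \<in> Ks. (\<Sum>i<d. \<bar>t i - g * real (k i)\<bar>) < g * real d}"
    then have lt: "(\<Sum>i<d. \<bar>t i - g * real (k i)\<bar>) < g * real d" by simp
    have eq: "\<bar>t i / g - real (k i)\<bar> = \<bar>t i - g * real (k i)\<bar> / g" for i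
    proof -
      have "t i / g - real (k i) = (t i - g * real (k i)) / g" using g by (simp add: diff_divide_distrib)
      then show ?thesis using g by (simp add: abs_divide)
    qed
    have "(\<Sum>i<d. \<bar>t i / g - real (k i)\<bar>) = (\<Sum>i<d. \<bar>t i - g * real (k i)\<bar>) / g"
      by (simp add: eq sum_divide_distrib)
    also have "\<dots> < real d" using lt g by (simp add: divide_less_eq mult.commute)
    finally have lt2: "(\<Sum>i<d. \<bar>t i / g - real (k i)\<bar>) < real d" .
    have "(\<Prod>i<d. w i (k i)) = 2 powr (\<Sum>i<d. 1 - \<bar>t i / g - real (k i)\<bar>)"
      unfolding w_def by (simp add: powr_sum)
    also have "(\<Sum>i<d. 1 - \<bar>t i / g - real (k i)\<bar>) = real d - (\<Sum>i<d. \<bar>t i / g - real (k i)\<bar>)"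
      by (simp add: sum_subtractf)
    finally have "(\<Prod>i<d. w i (k i)) = 2 powr (real d - (\<Sum>i<d. \<bar>t i / g - real (k i)\<bar>))" .
    moreover have "(1::real) \<le> 2 powr (real d - (\<Sum>i<d. \<bar>t i / g - real (k i)\<bar>))"
      by (rule ge_one_powr_ge_zero) (use lt2 in auto)
    ultimately show "1 \<le> (\<Prod>i<d. w i (k i))" by simp
  qed
  also have "\<dots> \<le> (\<Sum>k\<in>Ks. \<Prod>i<d. w i (k i))"
    by (rule sum_mono2) (auto simp: fin w_def intro!: prod_nonneg)
  also have "\<dots> = (\<Prod>i<d. \<Sum>j<M. w i j)"
    unfolding Ks_def by (rule prod_sum_PiE[symmetric]) auto
  also have "\<dots> \<le> (\<Prod>i<d. (8::real))"
  proof (rule prod_mono)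
    fix i assume "i \<in> {..<d}"
    have "(\<Sum>j<M. w i j) = (\<Sum>j<M. 2 * 2 powr (-\<bar>t i / g - real j\<bar>))"
      unfolding w_def by (intro sum.cong refl) (simp add: powr_diff powr_minus divide_inverse)
    also have "\<dots> = 2 * (\<Sum>j<M. 2 powr (-\<bar>t i / g - real j\<bar>))" by (simp add: sum_distrib_left)
    also have "\<dots> \<le> 8" using oneD[where M=M and u="t i / g"] by simp
    finally show "0 \<le> (\<Sum>j<M. w i j) \<and> (\<Sum>j<M. w i j) \<le> 8" by (simp add: w_def sum_nonneg)
  qed
  also have "\<dots> = 8^d" by simp
  finally show ?thesis unfolding Ks_def by simp
qed


lemma vnorm_meas:
  assumes "\<And>i. i < d \<Longrightarrow> F i \<in> borel_measurable M"
  shows "(\<lambda>r. vnorm nk d (\<lambda>i. F i r)) \<in> borel_measurable M"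
proof (cases nk)
  case L1
  have "(\<lambda>r. \<Sum>i<d. \<bar>F i r\<bar>) \<in> borel_measurable M"
    by (rule borel_measurable_sum) (use assms in auto)
  then show ?thesis using L1 by simp
next
  case L2
  have "(\<lambda>r. \<Sum>i<d. (F i r)\<^sup>2) \<in> borel_measurable M"
    by (rule borel_measurable_sum) (use assms in auto)
  then have "(\<lambda>r. sqrt (\<Sum>i<d. (F i r)\<^sup>2)) \<in> borel_measurable M"
    by (rule measurable_compose[OF _ borel_measurable_sqrt])
  then show ?thesis using L2 by simp
next
  case Linf
  define G where "G = (\<lambda>i r. if i < d then \<bar>F i r\<bar> else 0)"
  have eq: "insert 0 ((\<lambda>i. \<bar>F i r\<bar>) ` {..<d}) = (\<lambda>i. G i r) ` {..d}" for r
  proof -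
    have "{..d} = insert d {..<d}" by auto
    then have "(\<lambda>i. G i r) ` {..d} = insert (G d r) ((\<lambda>i. G i r) ` {..<d})" by simp
    also have "(\<lambda>i. G i r) ` {..<d} = (\<lambda>i. \<bar>F i r\<bar>) ` {..<d}" unfolding G_def by auto
    finally show ?thesis by (simp add: G_def)
  qed
  have "(\<lambda>r. Max ((\<lambda>i. G i r) ` {..d})) \<in> borel_measurable M"
  proof (rule borel_measurable_Max)
    fix i assume "i \<in> {..d}"
    show "G i \<in> borel_measurable M"
    proof (cases "i < d")
      case True
      then have "F i \<in> borel_measurable M" using assms by auto
      then have "(\<lambda>r. \<bar>F i r\<bar>) \<in> borel_measurable M" by measurable
      then show ?thesis using True by (simp add: G_def)
    next
      case False then show ?thesis by (simp add: G_def)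
    qed
  qed simp
  then show ?thesis using Linf by (simp add: eq)
qed

definition DD :: "normkind \<Rightarrow> nat \<Rightarrow> real" where
  "DD nk d = (case nk of L1 \<Rightarrow> real d | L2 \<Rightarrow> sqrt (real d) | Linf \<Rightarrow> 1)"

lemma DD_pos: "1 \<le> d \<Longrightarrow> DD nk d > 0"
  by (cases nk) (auto simp: DD_def)

lemma l1_le_vnorm: "1 \<le> d \<Longrightarrow> (\<Sum>i<d. \<bar>v i\<bar>) \<le> (real d / DD nk d) * vnorm nk d v"
proof (cases nk)
  case L1 then show ?thesis by (simp add: DD_def)
next
  case L2
  assume d: "1 \<le> d"
  have "(\<Sum>i<d. \<bar>v i\<bar>)\<^sup>2 \<le> (\<Sum>i<d. (\<bar>v i\<bar>)\<^sup>2) * card {..<d::nat}"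
    by (rule sum_squared_le_sum_of_squares)
  then have "(\<Sum>i<d. \<bar>v i\<bar>)\<^sup>2 \<le> real d * (\<Sum>i<d. (v i)\<^sup>2)" by (simp add: mult.commute)
  then have "(\<Sum>i<d. \<bar>v i\<bar>) \<le> sqrt (real d * (\<Sum>i<d. (v i)\<^sup>2))"
    by (rule real_le_rsqrt)
  also have "\<dots> = sqrt (real d) * sqrt (\<Sum>i<d. (v i)\<^sup>2)" by (simp add: real_sqrt_mult)
  also have "sqrt (real d) = real d / sqrt (real d)" using d
    by (metis div_by_1 divide_divide_eq_right of_nat_0_le_iff real_div_sqrt)
  finally show ?thesis using L2 by (simp add: DD_def)
next
  case Linf
  have "(\<Sum>i<d. \<bar>v i\<bar>) \<le> of_nat (card {..<d}) * Max (insert 0 ((\<lambda>i. \<bar>v i\<bar>) ` {..<d}))"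
    by (rule sum_bounded_above) (auto intro: Max_ge)
  then show ?thesis using Linf by (simp add: DD_def)
qed

lemma vnorm_le_box: "0 \<le> B \<Longrightarrow> (\<And>i. i < d \<Longrightarrow> \<bar>v i\<bar> \<le> B) \<Longrightarrow> vnorm nk d v \<le> DD nk d * B"
proof (cases nk)
  case L1
  assume "0 \<le> B" "\<And>i. i < d \<Longrightarrow> \<bar>v i\<bar> \<le> B"
  then have "(\<Sum>i<d. \<bar>v i\<bar>) \<le> of_nat (card {..<d}) * B" by (intro sum_bounded_above) auto
  then show ?thesis using L1 by (simp add: DD_def)
next
  case L2
  assume B: "0 \<le> B" "\<And>i. i < d \<Longrightarrow> \<bar>v i\<bar> \<le> B"
  have "(\<Sum>i<d. (v i)\<^sup>2) \<le> of_nat (card {..<d}) * B\<^sup>2"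
  proof (intro sum_bounded_above)
    fix i assume "i \<in> {..<d}"
    then have "\<bar>v i\<bar> \<le> B" using B by auto
    then have "\<bar>v i\<bar>\<^sup>2 \<le> B\<^sup>2" by (intro power_mono) auto
    then show "(v i)\<^sup>2 \<le> B\<^sup>2" by simp
  qed
  then have "sqrt (\<Sum>i<d. (v i)\<^sup>2) \<le> sqrt (real d * B\<^sup>2)" by simp
  also have "\<dots> = sqrt (real d) * B" using B by (simp add: real_sqrt_mult)
  finally show ?thesis using L2 by (simp add: DD_def)
next
  case Linf
  assume B: "0 \<le> B" "\<And>i. i < d \<Longrightarrow> \<bar>v i\<bar> \<le> B"
  have "Max (insert 0 ((\<lambda>i. \<bar>v i\<bar>) ` {..<d})) \<le> B" using B by (subst Max_le_iff) auto
  then show ?thesis using Linf by (simp add: DD_def)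
qed

lemma vnorm_zero[simp]: "vnorm nk d (\<lambda>i. 0) = 0"
  by (cases nk) (auto simp: image_constant_conv)

lemma vnorm_uminus: "vnorm nk d (\<lambda>i. - v i) = vnorm nk d v"
  by (cases nk) auto

lemma vnorm_nonneg: "vnorm nk d v \<ge> 0"
  by (cases nk) (auto intro: sum_nonneg)

lemma geom2: "(\<Sum>i\<le>b. (2::nat)^i) < 2^(b+1)"
  by (induction b) auto

lemma lists_fin: "finite {m::bool list. length m \<le> b}"
proof -
  have "{m::bool list. length m \<le> b} = {xs. set xs \<subseteq> UNIV \<and> length xs \<le> b}" by auto
  then show ?thesis using finite_lists_length_le[of "UNIV::bool set" b] by simp
qed

lemma lists_card: "card {m::bool list. length m \<le> b} \<le> 2^(b+1)"
proof -
  have "{m::bool list. length m \<le> b} = {xs. set xs \<subseteq> UNIV \<and> length xs \<le> b}" by auto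
  then have "card {m::bool list. length m \<le> b} = (\<Sum>i\<le>b. 2^i)"
    using card_lists_length_le[of "UNIV::bool set" b] by simp
  then show ?thesis using geom2[of b] by simp
qed


theorem theorem38:
  shows "\<exists>c>0. \<forall>(nk::normkind) (n::nat) (d::nat) (b::nat) (P::(nat \<Rightarrow> bool) measure) msg out (y::real).
    2 \<le> n \<longrightarrow> 1 \<le> d \<longrightarrow> 0 \<le> y \<longrightarrow> prob_space P \<longrightarrow> mean_est_alg nk n d b P msg out \<longrightarrow>
    (\<exists>x. valid_input nk n d x y \<and>
       (\<integral>\<^sup>+ r. ennreal ((vnorm nk d (\<lambda>i. est_of msg out x y r i - mean_vec n x i))\<^sup>2) \<partial>P)
         \<ge> ennreal (c * y\<^sup>2 * 2 powr (- (2 * real b / real d))))"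
proof (intro exI[of _ "1/32768::real"] conjI allI impI)
  fix nk :: normkind and n d b :: nat and P :: "(nat \<Rightarrow> bool) measure" and msg out and y :: real
  assume n: "2 \<le> n" and d: "1 \<le> d" and y0: "0 \<le> y" and P: "prob_space P"
    and alg: "mean_est_alg nk n d b P msg out"
  show "\<exists>x. valid_input nk n d x y \<and>
       (\<integral>\<^sup>+ r. ennreal ((vnorm nk d (\<lambda>i. est_of msg out x y r i - mean_vec n x i))\<^sup>2) \<partial>P)
         \<ge> ennreal (1/32768 * y\<^sup>2 * 2 powr (- (2 * real b / real d)))"
  proof (cases "y = 0")
    case True
    show ?thesis
      by (rule exI[of _ "\<lambda>_ _. 0"]) (simp add: True valid_input_def)
  next
    case False
    then have y: "y > 0" using y0 by simp
    define q where "q = b div d + 3"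
    define M :: nat where "M = 8 * 2^q"
    define D where "D = DD nk d"
    define h where "h = y / (D * M)"
    define a where "a = real (n-1) / real n"
    define g where "g = a * h"
    define \<epsilon> where "\<epsilon> = y / (2*M)"
    define Ks where "Ks = PiE {..<d} (\<lambda>_. {..<M})"
    define z where "z = (\<lambda>(k::nat\<Rightarrow>nat) i. if i < d then h * real (k i) else 0)"
    define X where "X = (\<lambda>k (v::nat). if v = 0 then (\<lambda>_::nat. 0::real) else z k)"
    define f where "f = (\<lambda>k r. (vnorm nk d (\<lambda>i. est_of msg out (X k) y r i - mean_vec n (X k) i))\<^sup>2)"
    have Dpos: "D > 0" unfolding D_def using DD_pos[OF d] .
    have Mpos: "M > 0" unfolding M_def by simp
    have hpos: "h > 0" unfolding h_def using y Dpos Mpos by simp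
    have a_ge: "a \<ge> 1/2" using n unfolding a_def by (simp add: field_simps)
    have gpos: "g > 0" unfolding g_def using a_ge hpos by simp
    have fin: "finite Ks" unfolding Ks_def by (auto intro: finite_PiE)
    have cardK: "card Ks = M^d" unfolding Ks_def by (simp add: card_PiE)
    have valid: "valid_input nk n d (X k) y" if k: "k \<in> Ks" for k
    proof -
      have zb: "vnorm nk d (z k) \<le> y"
      proof -
        have "vnorm nk d (z k) \<le> D * (h * M)"
          unfolding D_def
        proof (rule vnorm_le_box)
          show "0 \<le> h * M" using hpos by simp
          fix i assume "i < d"
          then have "k i < M" using k unfolding Ks_def by auto
          then show "\<bar>z k i\<bar> \<le> h * M" using hpos \<open>i < d\<close> unfolding z_def by simp
        qed
        also have "D * (h * M) = y" unfolding h_def using Dpos Mpos by simp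
        finally show ?thesis .
      qed
      have zb': "vnorm nk d (\<lambda>i. - z k i) \<le> y" using zb by (simp add: vnorm_uminus)
      show ?thesis unfolding valid_input_def
      proof (intro conjI allI impI)
        fix v i assume "v < n" "d \<le> i" then show "X k v i = 0" by (simp add: X_def z_def)
      next
        fix u v assume "u < n" "v < n"
        show "vnorm nk d (\<lambda>i. X k u i - X k v i) \<le> y"
          using zb zb' y0 by (cases "u = 0"; cases "v = 0") (auto simp: X_def)
      qed
    qed
    have mean: "mean_vec n (X k) i = a * z k i" for k i
    proof -
      obtain n' where n': "n = Suc n'" using n by (cases n) auto
      have "(\<Sum>v<n. X k v i) = (\<Sum>v<n'. z k i)"
        unfolding n' sum.lessThan_Suc_shift by (simp add: X_def)
      then show ?thesis unfolding mean_vec_def a_def using n' by simp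
    qed
    define L where "L = {m::bool list. length m \<le> b}"
    have Lfin: "finite L" unfolding L_def by (rule lists_fin)
    have Lcard: "card L \<le> 2^(b+1)" unfolding L_def by (rule lists_card)
    have est_in: "\<exists>m\<in>L. est_of msg out (X k) y r = out 0 (\<lambda>_. 0) y r m"
      if "k \<in> Ks" "r \<in> space P" for k r
    proof -
      have "length (msg 0 (X k) y r) \<le> b"
        using alg valid[OF that(1)] that(2) n unfolding mean_est_alg_def by auto
      then show ?thesis unfolding est_of_def L_def by (auto simp: X_def)
    qed
    have count: "card {k\<in>Ks. vnorm nk d (\<lambda>i. s i - mean_vec n (X k) i) < \<epsilon>} \<le> 8^d" for s
    proof -
      have "{k\<in>Ks. vnorm nk d (\<lambda>i. s i - mean_vec n (X k) i) < \<epsilon>}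
          \<subseteq> {k \<in> Ks. (\<Sum>i<d. \<bar>s i - g * real (k i)\<bar>) < g * real d}"
      proof safe
        fix k assume k: "k \<in> Ks" and lt: "vnorm nk d (\<lambda>i. s i - mean_vec n (X k) i) < \<epsilon>"
        have "(\<Sum>i<d. \<bar>s i - g * real (k i)\<bar>) = (\<Sum>i<d. \<bar>s i - mean_vec n (X k) i\<bar>)"
          by (intro sum.cong refl) (simp add: mean z_def g_def)
        also have "\<dots> \<le> (real d / D) * vnorm nk d (\<lambda>i. s i - mean_vec n (X k) i)"
          unfolding D_def by (rule l1_le_vnorm[OF d])
        also have "\<dots> < (real d / D) * \<epsilon>"
          using lt d Dpos by (intro mult_strict_left_mono) auto
        also have "\<dots> \<le> g * real d"
        proof -
          have "\<epsilon> \<le> g * D"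
            unfolding \<epsilon>_def g_def h_def using a_ge Dpos Mpos y
            by (simp add: field_simps)
          then have "(real d / D) * \<epsilon> \<le> (real d / D) * (g * D)"
            using Dpos by (intro mult_left_mono) auto
          also have "\<dots> = g * real d" using Dpos by simp
          finally show ?thesis .
        qed
        finally show "(\<Sum>i<d. \<bar>s i - g * real (k i)\<bar>) < g * real d" .
      qed
      then have "card {k\<in>Ks. vnorm nk d (\<lambda>i. s i - mean_vec n (X k) i) < \<epsilon>}
          \<le> card {k \<in> Ks. (\<Sum>i<d. \<bar>s i - g * real (k i)\<bar>) < g * real d}"
        by (rule card_mono[rotated]) (simp add: fin)
      also have "\<dots> \<le> 8^d" unfolding Ks_def by (rule count_lemma[OF gpos])
      finally show ?thesis .
    qed
    have bigM: "2 * 2^(b+1) * 8^d \<le> M^d"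
    proof -
      have "b + 2 \<le> q * d"
      proof -
        have "b \<le> (b div d) * d + d" using d
        proof -
          have "b = (b div d) * d + b mod d" by simp
          moreover have "b mod d < d" using d by simp
          ultimately show ?thesis by linarith
        qed
        then show ?thesis unfolding q_def using d by (simp add: algebra_simps)
      qed
      then have "2^(b+2) \<le> (2::nat)^(q*d)" by (intro power_increasing) auto
      then have "2 * 2^(b+1) * 8^d \<le> 2^(q*d) * (8::nat)^d" by simp
      also have "\<dots> = M^d"
      proof -
        have "(2::nat)^(q*d) = (2^q)^d" by (simp add: power_mult)
        then show ?thesis unfolding M_def by (simp add: power_mult_distrib mult.commute)
      qed
      finally show ?thesis .
    qed
    have fnn: "f k r \<ge> 0" for k r unfolding f_def by simp
    have per_r: "(\<Sum>k\<in>Ks. f k r) \<ge> real (card Ks) * \<epsilon>\<^sup>2 / 2" if r: "r \<in> space P" for r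
    proof -
      define Bad where "Bad = {k\<in>Ks. vnorm nk d (\<lambda>i. est_of msg out (X k) y r i - mean_vec n (X k) i) < \<epsilon>}"
      have "Bad \<subseteq> (\<Union>m\<in>L. {k\<in>Ks. vnorm nk d (\<lambda>i. out 0 (\<lambda>_. 0) y r m i - mean_vec n (X k) i) < \<epsilon>})"
      proof
        fix k assume "k \<in> Bad"
        then have k: "k \<in> Ks" and lt: "vnorm nk d (\<lambda>i. est_of msg out (X k) y r i - mean_vec n (X k) i) < \<epsilon>"
          unfolding Bad_def by auto
        obtain m where "m \<in> L" "est_of msg out (X k) y r = out 0 (\<lambda>_. 0) y r m" using est_in[OF k r] by blast
        then show "k \<in> (\<Union>m\<in>L. {k\<in>Ks. vnorm nk d (\<lambda>i. out 0 (\<lambda>_. 0) y r m i - mean_vec n (X k) i) < \<epsilon>})"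
          using k lt by auto
      qed
      then have "card Bad \<le> card (\<Union>m\<in>L. {k\<in>Ks. vnorm nk d (\<lambda>i. out 0 (\<lambda>_. 0) y r m i - mean_vec n (X k) i) < \<epsilon>})"
        by (rule card_mono[rotated]) (rule finite_subset[OF _ fin], auto)
      also have "\<dots> \<le> (\<Sum>m\<in>L. card {k\<in>Ks. vnorm nk d (\<lambda>i. out 0 (\<lambda>_. 0) y r m i - mean_vec n (X k) i) < \<epsilon>})"
        by (rule card_UN_le[OF Lfin])
      also have "\<dots> \<le> (\<Sum>m\<in>L. 8^d)" by (intro sum_mono count)
      also have "\<dots> = card L * 8^d" by simp
      also have "\<dots> \<le> 2^(b+1) * 8^d" using Lcard by simp
      finally have cB: "2 * card Bad \<le> card Ks" using bigM cardK by linarith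
      have BK: "Bad \<subseteq> Ks" unfolding Bad_def by auto
      have "(\<Sum>k\<in>Ks. f k r) \<ge> (\<Sum>k\<in>Ks - Bad. f k r)"
        by (rule sum_mono2) (auto simp: fin fnn)
      moreover have "(\<Sum>k\<in>Ks - Bad. f k r) \<ge> (\<Sum>k\<in>Ks - Bad. \<epsilon>\<^sup>2)"
      proof (rule sum_mono)
        fix k assume "k \<in> Ks - Bad"
        then have "\<epsilon> \<le> vnorm nk d (\<lambda>i. est_of msg out (X k) y r i - mean_vec n (X k) i)"
          unfolding Bad_def by auto
        moreover have "0 \<le> \<epsilon>" unfolding \<epsilon>_def using y by simp
        ultimately show "\<epsilon>\<^sup>2 \<le> f k r" unfolding f_def by (intro power_mono) auto
      qed
      moreover have "(\<Sum>k\<in>Ks - Bad. \<epsilon>\<^sup>2) = real (card Ks - card Bad) * \<epsilon>\<^sup>2"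
        using card_Diff_subset[OF finite_subset[OF BK fin] BK] by simp
      moreover have "real (card Ks) / 2 * \<epsilon>\<^sup>2 \<le> real (card Ks - card Bad) * \<epsilon>\<^sup>2"
      proof (rule mult_right_mono)
        show "real (card Ks) / 2 \<le> real (card Ks - card Bad)" using cB by linarith
      qed simp
      ultimately have "real (card Ks) / 2 * \<epsilon>\<^sup>2 \<le> (\<Sum>k\<in>Ks. f k r)"
        by linarith
      then show ?thesis by simp
    qed
    have meas: "(\<lambda>r. ennreal (f k r)) \<in> borel_measurable P" if k: "k \<in> Ks" for k
    proof -
      have "(\<lambda>r. est_of msg out (X k) y r i) \<in> borel_measurable P" if "i < d" for i
        using alg valid[OF k] that unfolding mean_est_alg_def by (auto intro: borel_measurable_integrable)
      then have "(\<lambda>r. vnorm nk d (\<lambda>i. est_of msg out (X k) y r i - mean_vec n (X k) i)) \<in> borel_measurable P"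
        by (intro vnorm_meas) auto
      then show ?thesis unfolding f_def by measurable
    qed
    have "(\<Sum>k\<in>Ks. \<integral>\<^sup>+r. ennreal (f k r) \<partial>P) = (\<integral>\<^sup>+r. (\<Sum>k\<in>Ks. ennreal (f k r)) \<partial>P)"
      by (rule nn_integral_sum[symmetric]) (use meas in auto)
    also have "\<dots> \<ge> (\<integral>\<^sup>+r. ennreal (real (card Ks) * \<epsilon>\<^sup>2 / 2) \<partial>P)"
    proof (rule nn_integral_mono)
      fix r assume "r \<in> space P"
      then show "ennreal (real (card Ks) * \<epsilon>\<^sup>2 / 2) \<le> (\<Sum>k\<in>Ks. ennreal (f k r))"
        using per_r[of r] by (simp add: sum_ennreal fnn ennreal_leI)
    qed
    also have "(\<integral>\<^sup>+r. ennreal (real (card Ks) * \<epsilon>\<^sup>2 / 2) \<partial>P) = ennreal (real (card Ks) * \<epsilon>\<^sup>2 / 2)"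
      using prob_space.emeasure_space_1[OF P] by simp
    finally have lowsum: "ennreal (real (card Ks) * \<epsilon>\<^sup>2 / 2) \<le> (\<Sum>k\<in>Ks. \<integral>\<^sup>+r. ennreal (f k r) \<partial>P)" .
    have Kne: "Ks \<noteq> {}" unfolding Ks_def using Mpos by (auto simp: PiE_eq_empty_iff)
    define I0 where "I0 = Max ((\<lambda>k. \<integral>\<^sup>+r. ennreal (f k r) \<partial>P) ` Ks)"
    have "I0 \<in> (\<lambda>k. \<integral>\<^sup>+r. ennreal (f k r) \<partial>P) ` Ks"
      unfolding I0_def by (rule Max_in) (use fin Kne in auto)
    then obtain k0 where k0: "k0 \<in> Ks" "I0 = (\<integral>\<^sup>+r. ennreal (f k0 r) \<partial>P)" by blast
    have "(\<Sum>k\<in>Ks. \<integral>\<^sup>+r. ennreal (f k r) \<partial>P) \<le> of_nat (card Ks) * I0"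
      by (rule sum_bounded_above) (use fin in \<open>auto simp: I0_def\<close>)
    moreover have "ennreal (real (card Ks) * \<epsilon>\<^sup>2 / 2) = of_nat (card Ks) * ennreal (\<epsilon>\<^sup>2 / 2)"
      using ennreal_mult[of "real (card Ks)" "\<epsilon>\<^sup>2 / 2"]
      by (simp add: ennreal_of_nat_eq_real_of_nat)
    ultimately have "of_nat (card Ks) * ennreal (\<epsilon>\<^sup>2 / 2) \<le> of_nat (card Ks) * I0"
      using lowsum by (metis (no_types) order.trans)
    moreover have "(of_nat (card Ks) :: ennreal) \<noteq> 0" using fin Kne by simp
    moreover have "(of_nat (card Ks) :: ennreal) \<noteq> top" by simp
    ultimately have I0ge: "ennreal (\<epsilon>\<^sup>2 / 2) \<le> I0"
      using ennreal_mult_le_mult_iff by blast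
    have const: "1/32768 * y\<^sup>2 * 2 powr (- (2 * real b / real d)) \<le> \<epsilon>\<^sup>2 / 2"
    proof -
      define T where "T = 2 powr (2 * real b / real d)"
      have Tpos: "T > 0" unfolding T_def by simp
      have neg: "2 powr (- (2 * real b / real d)) = 1 / T"
        unfolding T_def by (simp add: powr_minus inverse_eq_divide)
      have qb: "real q \<le> 3 + real b / real d"
      proof -
        have "(b div d) * d \<le> b" by (metis div_mult_mod_eq le_add1)
        then have "real (b div d) * real d \<le> real b" by (metis of_nat_le_iff of_nat_mult)
        then have "real (b div d) \<le> real b / real d" using d by (simp add: le_divide_eq)
        then show ?thesis unfolding q_def by simp
      qed
      have M2: "(real M)\<^sup>2 = 64 * 4^q"
      proof -
        have "(2::real)^q * 2^q = 4^q" by (simp add: power_mult_distrib[symmetric])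
        then show ?thesis unfolding M_def by (simp add: power2_eq_square algebra_simps)
      qed
      have "(4::real)^q = 2^(2*q)" by (simp add: power_mult)
      also have "\<dots> = 2 powr (real (2*q))" by (rule powr_realpow[symmetric]) simp
      also have "\<dots> \<le> 2 powr (6 + 2 * real b / real d)"
        using qb by (intro powr_mono) auto
      also have "\<dots> = 2 powr 6 * T" unfolding T_def by (simp add: powr_add)
      also have "(2::real) powr 6 = 64" by (simp add: powr_numeral)
      finally have q4: "(4::real)^q \<le> 64 * T" .
      have "1/32768 * y\<^sup>2 * 2 powr (- (2 * real b / real d)) = y\<^sup>2 / (32768 * T)"
        by (simp add: neg)
      also have "\<dots> \<le> y\<^sup>2 / (512 * 4^q)"
        using q4 Tpos by (intro divide_left_mono) auto
      also have "\<dots> = \<epsilon>\<^sup>2 / 2"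
        unfolding \<epsilon>_def using M2 by (simp add: power_divide)
      finally show ?thesis .
    qed
    show ?thesis
    proof (intro exI[of _ "X k0"] conjI)
      show "valid_input nk n d (X k0) y" using valid[OF k0(1)] .
      have "ennreal (1/32768 * y\<^sup>2 * 2 powr (- (2 * real b / real d))) \<le> ennreal (\<epsilon>\<^sup>2 / 2)"
        using const by (rule ennreal_leI)
      also have "\<dots> \<le> I0" by (rule I0ge)
      finally show "ennreal (1/32768 * y\<^sup>2 * 2 powr (- (2 * real b / real d)))
        \<le> (\<integral>\<^sup>+ r. ennreal ((vnorm nk d (\<lambda>i. est_of msg out (X k0) y r i - mean_vec n (X k0) i))\<^sup>2) \<partial>P)"
        using k0(2) unfolding f_def by simp
    qed
  qed
qed simp

end
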